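(* Let $m,k\in\mathbb{N}$, let $\beta,\mu\in\mathbb{C}$ with $\frac{\beta}{2}-m\notin\mathbb{Z}_0^-$, $\Re(\beta)>0$ and $\Re(\mu)>0$. Then \[ \int_0^\infty t^{\beta-1}e^{-\mu t}\,{}_2F_2\left[\begin{array}{r} -2m-1,\ -m-k-\tfrac{1}{2};\\ -2m-2k-1,\ \tfrac{\beta}{2}-m;\end{array}\mu t\right]_{2m+1} dt=0. \]
   Context: $\mathbb{N}=\{1,2,3,\dots\}$, $\mathbb{Z}_0^-=\{0,-1,-2,\dots\}$. For $a\in\mathbb{C}$ and $n\in\mathbb{N}_0$, $(a)_0=1$ and $(a)_n=a(a+1)\cdots(a+n-1)$. For $N\in\mathbb{N}_0$, the truncated series is ${}_2F_2\left[\begin{array}{r} a_1,a_2;\\ b_1,b_2;\end{array}z\right]_N=\sum_{n=0}^{N}\frac{(a_1)_n(a_2)_n}{(b_1)_n(b_2)_n}\frac{z^n}{n!}$ (first $N+1$ terms). The left side is the Mellin transform $\int_0^\infty t^{s-1}f(t)\,dt$ at $s=\beta$. *)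

theory Defs
  imports "HOL-Analysis.Analysis"
begin

definition hyp2F2_trunc :: "complex \<Rightarrow> complex \<Rightarrow> complex \<Rightarrow> complex \<Rightarrow> nat \<Rightarrow> complex \<Rightarrow> complex" where
  "hyp2F2_trunc a1 a2 b1 b2 N z =
     (\<Sum>n = 0..N. (pochhammer a1 n * pochhammer a2 n) / (pochhammer b1 n * pochhammer b2 n)
                    * z ^ n / of_nat (fact n))"

end

theory Submission
  imports Defs "HOL-Computational_Algebra.Formal_Power_Series" "HOL-Real_Asymp.Real_Asymp"
begin


lemma poch_neg_nat:
  "pochhammer (- of_nat n :: complex) j / fact j = (-1)^j * of_nat (n choose j)"
proof -
  have "of_nat (n choose j) = (of_nat n gchoose j :: complex)" by (rule binomial_gbinomial)
  also have "\<dots> = (-1)^j * pochhammer (- of_nat n) j / fact j" by (rule gbinomial_pochhammer)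
  finally have e: "of_nat (n choose j) = (-1)^j * pochhammer (- of_nat n) j / (fact j :: complex)" .
  have m1: "(-1)^j * (-1)^j = (1::complex)" by (simp flip: power_mult_distrib)
  show ?thesis unfolding e by (simp add: mult.assoc[symmetric] m1)
qed

lemma vand_binom:
  fixes a c :: complex
  assumes "\<And>i. i < n \<Longrightarrow> c \<noteq> - of_nat i"
  shows "(\<Sum>j=0..n. of_nat (n choose j) * (-1)^j * (pochhammer a j / pochhammer c j))
          = pochhammer (c - a) n / pochhammer c n"
proof -
  have "(\<Sum>j=0..n. of_nat (n choose j) * (-1)^j * (pochhammer a j / pochhammer c j))
      = (\<Sum>j=0..n. pochhammer a j * pochhammer (- (of_nat n)) j / (of_nat (fact j) * pochhammer c j))"
  proof (rule sum.cong[OF refl])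
    fix j
    have "pochhammer (- of_nat n :: complex) j = fact j * ((-1)^j * of_nat (n choose j))"
      using poch_neg_nat[of n j] by (simp add: field_simps)
    then show "of_nat (n choose j) * (-1)^j * (pochhammer a j / pochhammer c j)
      = pochhammer a j * pochhammer (- (of_nat n)) j / (of_nat (fact j) * pochhammer c j)"
      by simp
  qed
  also have "\<dots> = pochhammer (c - a) n / pochhammer c n"
    by (rule Vandermonde_pochhammer) (use assms in auto)
  finally show ?thesis .
qed

lemma poch_nz:
  fixes c :: complex assumes "c \<notin> \<int>\<^sub>\<le>\<^sub>0" shows "pochhammer c n \<noteq> 0"
  using assms by (auto simp: pochhammer_eq_0_iff)

lemma aux:
  fixes A B C D F G H X Y :: complex
  assumes "C\<noteq>0" "D\<noteq>0" "F \<noteq> 0" "G\<noteq>0" "H\<noteq>0"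
  shows "A*X*(B*Y)/(C*D*F) * (F/(G*H)) = A*B/(C*G) * (Y*X/(H*D))"
  using assms by (simp add: field_simps)

lemma step2:
  fixes \<beta> c :: complex and m j :: nat
  assumes c: "c \<notin> \<int>\<^sub>\<le>\<^sub>0" and cb: "c = \<beta>/2 - of_nat m" and j: "j \<le> 2*m+1"
  defines "p \<equiv> \<lambda>n. pochhammer (- of_nat (2*m+1)) n * pochhammer \<beta> n / (pochhammer c n * fact n)"
  shows "(\<Sum>n=0..2*m+1. p n * of_nat (n choose j)) = (-1)^(2*m+1-j) * p j"
proof -
  define N where "N = 2*m+1"
  define M where "M = N - j"
  have NM: "N = j + M" using j by (simp add: M_def N_def)
  have cj: "c + of_nat j \<notin> \<int>\<^sub>\<le>\<^sub>0"
  proof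
    assume "c + of_nat j \<in> \<int>\<^sub>\<le>\<^sub>0"
    then obtain q where q: "c + of_nat j = - of_nat q" by (auto elim!: nonpos_Ints_cases')
    hence "c = - of_nat q - of_nat j" by (metis add_diff_cancel_right')
    hence "c = - of_nat (q + j)" by simp
    with c show False by (metis minus_of_nat_in_nonpos_Ints)
  qed
  have "(\<Sum>n=0..N. p n * of_nat (n choose j)) = (\<Sum>n=j..N. p n * of_nat (n choose j))"
    by (rule sum.mono_neutral_right) auto
  also have "\<dots> = (\<Sum>i=0..M. p (i+j) * of_nat ((i+j) choose j))"
    using sum.shift_bounds_cl_nat_ivl[of "\<lambda>n. p n * of_nat (n choose j)" 0 j M] NM
    by (simp add: add.commute)
  also have "\<dots> = (\<Sum>i=0..M. p j * (pochhammer (\<beta> + of_nat j) i * pochhammer (- of_nat M) i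
                    / (of_nat (fact i) * pochhammer (c + of_nat j) i)))"
  proof (rule sum.cong[OF refl])
    fix i
    have nz1: "pochhammer c j \<noteq> 0" "pochhammer (c + of_nat j) i \<noteq> 0"
      using poch_nz[OF c] poch_nz[OF cj] by auto
    have eN: "- of_nat N + of_nat j = (- of_nat M :: complex)" using NM by simp
    have bin: "of_nat ((i+j) choose j) = (fact (i+j) / (fact j * fact i) :: complex)"
      by (subst binomial_fact) auto
    show "p (i+j) * of_nat ((i+j) choose j) = p j * (pochhammer (\<beta> + of_nat j) i * pochhammer (- of_nat M) i
                    / (of_nat (fact i) * pochhammer (c + of_nat j) i))"
    proof -
      have pp: "pochhammer z (i+j) = pochhammer z j * pochhammer (z + of_nat j) i" for z :: complex
        using pochhammer_product'[of z j i] by (simp add: add.commute)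
      have ff: "(fact (i+j) :: complex) \<noteq> 0" "(fact j :: complex) \<noteq> 0" "(fact i :: complex) \<noteq> 0" by auto
      show ?thesis unfolding p_def N_def[symmetric] bin pp eN of_nat_fact
        by (rule aux) (use nz1 ff in auto)
    qed
  qed
  also have "\<dots> = p j * (pochhammer (c + of_nat j - (\<beta> + of_nat j)) M / pochhammer (c + of_nat j) M)"
  proof -
    have "(\<Sum>i=0..M. pochhammer (\<beta> + of_nat j) i * pochhammer (- of_nat M) i
                    / (of_nat (fact i) * pochhammer (c + of_nat j) i))
        = pochhammer (c + of_nat j - (\<beta> + of_nat j)) M / pochhammer (c + of_nat j) M"
    proof (rule Vandermonde_pochhammer, safe)
      fix i assume "i \<in> {0..<M}" "c + of_nat j = - of_nat i"
      hence "c = - of_nat i - of_nat j" by (metis add_diff_cancel_right')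
      hence "c = - of_nat (i + j)" by simp
      with c show False by (metis minus_of_nat_in_nonpos_Ints)
    qed
    thus ?thesis by (simp only: sum_distrib_left[symmetric])
  qed
  also have "pochhammer (c + of_nat j - (\<beta> + of_nat j)) M = (-1)^M * pochhammer (c + of_nat j) M"
  proof -
    have e1: "c + of_nat j - (\<beta> + of_nat j) = - (c + 2 * of_nat m)" using cb by simp
    have e2: "c + 2 * of_nat m - of_nat M + 1 = c + of_nat j"
    proof -
      have "(of_nat M :: complex) = of_nat N - of_nat j" using j unfolding M_def N_def by (simp add: of_nat_diff)
      also have "(of_nat N :: complex) = 2 * of_nat m + 1" unfolding N_def by simp
      finally show ?thesis by simp
    qed
    show ?thesis by (simp only: e1 e2 pochhammer_minus)
  qed
  finally show ?thesis using poch_nz[OF cj, of M] unfolding N_def M_def by simp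
qed

lemma watson_zero:
  fixes \<beta> :: complex and m k :: nat
  assumes c: "\<beta>/2 - of_nat m \<notin> \<int>\<^sub>\<le>\<^sub>0"
  defines "a \<equiv> - of_nat m - of_nat k - 1/2 :: complex"
  defines "p \<equiv> \<lambda>n. pochhammer (- of_nat (2*m+1)) n * pochhammer \<beta> n / (pochhammer (\<beta>/2 - of_nat m) n * fact n)"
  defines "l \<equiv> \<lambda>n. pochhammer a n / pochhammer (2*a) n"
  shows "(\<Sum>n=0..2*m+1. p n * l n) = 0"
proof -
  define N where "N = 2*m+1"
  have s1: "l n = (\<Sum>j=0..N. of_nat (n choose j) * (-1)^j * l j)" if n: "n \<le> N" for n
  proof -
    have "(\<Sum>j=0..n. of_nat (n choose j) * (-1)^j * (pochhammer a j / pochhammer (2*a) j))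
          = pochhammer (2*a - a) n / pochhammer (2*a) n"
    proof (rule vand_binom)
      fix i assume i: "i < n"
      have "2*a = - of_nat (2*m+2*k+1)" unfolding a_def by (simp add: algebra_simps)
      moreover have "- of_nat (2*m+2*k+1) \<noteq> (- of_nat i :: complex)"
      proof -
        have "(2*m+2*k+1) \<noteq> i" using i n unfolding N_def by linarith
        hence "of_nat (2*m+2*k+1) \<noteq> (of_nat i :: complex)" by (metis of_nat_eq_iff)
        thus ?thesis by (metis neg_equal_iff_equal)
      qed
      ultimately show "2*a \<noteq> - of_nat i" by simp
    qed
    hence "l n = (\<Sum>j=0..n. of_nat (n choose j) * (-1)^j * l j)" unfolding l_def by simp
    also have "\<dots> = (\<Sum>j=0..N. of_nat (n choose j) * (-1)^j * l j)"
      by (rule sum.mono_neutral_left) (use n in auto)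
    finally show ?thesis .
  qed
  have s2: "(\<Sum>n=0..N. p n * of_nat (n choose j)) = (-1)^(N-j) * p j" if "j \<le> N" for j
    unfolding p_def N_def by (rule step2[OF c refl]) (use that in \<open>simp add: N_def\<close>)
  define S where "S = (\<Sum>n=0..N. p n * l n)"
  have "S = (\<Sum>n=0..N. p n * (\<Sum>j=0..N. of_nat (n choose j) * (-1)^j * l j))"
    unfolding S_def by (rule sum.cong[OF refl]) (simp add: s1)
  also have "\<dots> = (\<Sum>n=0..N. \<Sum>j=0..N. (-1)^j * l j * (p n * of_nat (n choose j)))"
    by (simp add: sum_distrib_left mult_ac)
  also have "\<dots> = (\<Sum>j=0..N. \<Sum>n=0..N. (-1)^j * l j * (p n * of_nat (n choose j)))"
    by (rule sum.swap)
  also have "\<dots> = (\<Sum>j=0..N. (-1)^j * l j * ((-1)^(N-j) * p j))"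
    by (rule sum.cong[OF refl]) (simp add: sum_distrib_left[symmetric] s2)
  also have "\<dots> = (\<Sum>j=0..N. (-1)^N * (p j * l j))"
  proof (rule sum.cong[OF refl])
    fix j assume "j \<in> {0..N}"
    hence "(-1)^j * (-1)^(N-j) = ((-1)^N :: complex)" by (simp flip: power_add)
    thus "(-1)^j * l j * ((-1)^(N-j) * p j) = (-1)^N * (p j * l j)"
      by (metis (no_types, lifting) mult.assoc mult.commute)
  qed
  also have "\<dots> = - S" unfolding S_def N_def by (simp add: sum_negf)
  finally have "S = - S" .
  hence "S = 0" by simp
  thus ?thesis unfolding S_def N_def .
qed



definition hh :: "complex \<Rightarrow> complex \<Rightarrow> nat \<Rightarrow> complex \<Rightarrow> complex" where
  "hh \<beta> \<mu> n z = z powr (\<beta> - 1) * z ^ n * \<mu> ^ n * exp (- \<mu> * z)"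
definition gg :: "complex \<Rightarrow> complex \<Rightarrow> nat \<Rightarrow> complex \<Rightarrow> complex" where
  "gg \<beta> \<mu> n z = z powr \<beta> * z ^ n * \<mu> ^ n * exp (- \<mu> * z)"
fun KK :: "complex \<Rightarrow> complex \<Rightarrow> nat \<Rightarrow> complex \<Rightarrow> complex" where
  "KK \<beta> \<mu> 0 z = 0"
| "KK \<beta> \<mu> (Suc n) z = (\<beta> + of_nat n) * KK \<beta> \<mu> n z + gg \<beta> \<mu> n z"

lemma gg_deriv:
  assumes z: "z \<notin> \<real>\<^sub>\<le>\<^sub>0"
  shows "(gg \<beta> \<mu> n has_field_derivative ((\<beta> + of_nat n) * hh \<beta> \<mu> n z - hh \<beta> \<mu> (Suc n) z)) (at z)"
proof -
  have z0: "z \<noteq> 0" using z by auto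
  have zb: "z powr \<beta> = z powr (\<beta> - 1) * z"
    using powr_add[of z "\<beta> - 1" 1] by simp
  have zn2: "of_nat n * z ^ (n - Suc 0) * (w * z) = of_nat n * (w * z ^ n)" for w
    by (cases n) (auto simp: algebra_simps)
  have D: "(gg \<beta> \<mu> n has_field_derivative ((\<beta> + of_nat n) * hh \<beta> \<mu> n z - hh \<beta> \<mu> (Suc n) z)) (at z)"
    unfolding gg_def[abs_def]
    apply (rule derivative_eq_intros refl z)+
    apply (simp add: hh_def zb)
    apply (rule disjI2)
    apply (simp add: zn2 algebra_simps)
    apply (cases n, auto)
    done
  show ?thesis using D .
qed

lemma KK_deriv:
  assumes z: "z \<notin> \<real>\<^sub>\<le>\<^sub>0"
  shows "((\<lambda>w. KK \<beta> \<mu> n w) has_field_derivative (pochhammer \<beta> n * hh \<beta> \<mu> 0 z - hh \<beta> \<mu> n z)) (at z)"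
proof (induction n)
  case 0
  show ?case using DERIV_const[of 0 "at z"] by simp
next
  case (Suc n)
  have "((\<lambda>w. (\<beta> + of_nat n) * KK \<beta> \<mu> n w + gg \<beta> \<mu> n w) has_field_derivative
      (\<beta> + of_nat n) * (pochhammer \<beta> n * hh \<beta> \<mu> 0 z - hh \<beta> \<mu> n z)
      + ((\<beta> + of_nat n) * hh \<beta> \<mu> n z - hh \<beta> \<mu> (Suc n) z)) (at z)"
    by (intro DERIV_add DERIV_cmult Suc gg_deriv z)
  hence "((\<lambda>w. (\<beta> + of_nat n) * KK \<beta> \<mu> n w + gg \<beta> \<mu> n w) has_field_derivative
      pochhammer \<beta> (Suc n) * hh \<beta> \<mu> 0 z - hh \<beta> \<mu> (Suc n) z) (at z)"
    by (rule DERIV_cong) (simp add: pochhammer_rec' algebra_simps)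
  moreover have "KK \<beta> \<mu> (Suc n) = (\<lambda>w. (\<beta> + of_nat n) * KK \<beta> \<mu> n w + gg \<beta> \<mu> n w)"
    by (rule ext) simp
  ultimately show ?case by simp
qed

lemma norm_gg:
  assumes t: "t > 0"
  shows "norm (gg \<beta> \<mu> n (of_real t)) = t powr (Re \<beta> + real n) * norm \<mu> ^ n * exp (- Re \<mu> * t)"
proof -
  have "norm (gg \<beta> \<mu> n (of_real t)) = t powr Re \<beta> * t ^ n * norm \<mu> ^ n * exp (- Re \<mu> * t)"
    unfolding gg_def using t
    by (simp add: norm_mult norm_power norm_powr_real_powr norm_exp_eq_Re)
  also have "t powr Re \<beta> * t ^ n = t powr (Re \<beta> + real n)"
    using t by (simp add: powr_add powr_realpow)
  finally show ?thesis .
qed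

lemma norm_hh:
  assumes t: "t > 0"
  shows "norm (hh \<beta> \<mu> n (of_real t)) = t powr (Re \<beta> + real n - 1) * norm \<mu> ^ n * exp (- Re \<mu> * t)"
proof -
  have "norm (hh \<beta> \<mu> n (of_real t)) = t powr (Re \<beta> - 1) * t ^ n * norm \<mu> ^ n * exp (- Re \<mu> * t)"
    unfolding hh_def using t
    by (simp add: norm_mult norm_power norm_powr_real_powr norm_exp_eq_Re)
  also have "t powr (Re \<beta> - 1) * t ^ n = t powr (Re \<beta> + real n - 1)"
  proof -
    have "Re \<beta> + real n - 1 = (Re \<beta> - 1) + real n" by simp
    hence "t powr (Re \<beta> + real n - 1) = t powr (Re \<beta> - 1) * t powr real n"
      by (simp only: powr_add)
    thus ?thesis using t by (simp add: powr_realpow)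
  qed
  finally show ?thesis .
qed

lemma gg_lim0:
  assumes "Re \<beta> > 0"
  shows "((\<lambda>t. gg \<beta> \<mu> n (of_real t)) \<longlongrightarrow> 0) (at_right 0)"
proof (rule tendsto_norm_zero_cancel)
  have "((\<lambda>t::real. t powr (Re \<beta> + real n) * norm \<mu> ^ n * exp (- Re \<mu> * t)) \<longlongrightarrow> 0 * norm \<mu> ^ n * exp (- Re \<mu> * 0)) (at_right 0)"
  proof (intro tendsto_intros)
    show "((\<lambda>t::real. t powr (Re \<beta> + real n)) \<longlongrightarrow> 0) (at_right 0)"
      using assms by (intro tendsto_zero_powrI[where b="Re \<beta> + real n"] tendsto_const tendsto_ident_at
         eventually_mono[OF eventually_at_right_less[of 0]]) auto
  qed
  hence "((\<lambda>t::real. t powr (Re \<beta> + real n) * norm \<mu> ^ n * exp (- Re \<mu> * t)) \<longlongrightarrow> 0) (at_right 0)"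
    by simp
  moreover have "\<forall>\<^sub>F t in at_right 0. t powr (Re \<beta> + real n) * norm \<mu> ^ n * exp (- Re \<mu> * t) = norm (gg \<beta> \<mu> n (of_real t))"
    by (simp add: eventually_at_right_less norm_gg eventually_mono[OF eventually_at_right_less[of 0]])
  ultimately show "((\<lambda>t. norm (gg \<beta> \<mu> n (of_real t))) \<longlongrightarrow> 0) (at_right 0)"
    by (rule Lim_transform_eventually)
qed

lemma gg_limtop:
  assumes "Re \<mu> > 0"
  shows "((\<lambda>t. gg \<beta> \<mu> n (of_real t)) \<longlongrightarrow> 0) at_top"
proof (rule tendsto_norm_zero_cancel)
  define b where "b = Re \<beta> + real n"
  define d where "d = Re \<mu>"
  have d: "d > 0" using assms by (simp add: d_def)
  have "((\<lambda>t::real. t powr b * exp (- d * t)) \<longlongrightarrow> 0) at_top"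
    using d by real_asymp
  hence "((\<lambda>t::real. t powr b * exp (- d * t) * norm \<mu> ^ n) \<longlongrightarrow> 0 * norm \<mu> ^ n) at_top"
    by (intro tendsto_intros)
  hence "((\<lambda>t::real. t powr b * exp (- d * t) * norm \<mu> ^ n) \<longlongrightarrow> 0) at_top"
    by simp
  moreover have "\<forall>\<^sub>F t in at_top. t powr b * exp (- d * t) * norm \<mu> ^ n = norm (gg \<beta> \<mu> n (of_real t))"
    using eventually_gt_at_top[of 0] by eventually_elim (simp add: norm_gg b_def d_def)
  ultimately show "((\<lambda>t. norm (gg \<beta> \<mu> n (of_real t))) \<longlongrightarrow> 0) at_top"
    by (rule Lim_transform_eventually)
qed

lemma KK_lim:
  assumes "\<And>n. ((\<lambda>t. gg \<beta> \<mu> n (of_real t)) \<longlongrightarrow> 0) F"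
  shows "((\<lambda>t. KK \<beta> \<mu> n (of_real t)) \<longlongrightarrow> 0) F"
proof (induction n)
  case 0 then show ?case by simp
next
  case (Suc n)
  have "((\<lambda>t. (\<beta> + of_nat n) * KK \<beta> \<mu> n (of_real t) + gg \<beta> \<mu> n (of_real t)) \<longlongrightarrow> (\<beta> + of_nat n) * 0 + 0) F"
    by (intro tendsto_intros Suc assms)
  thus ?case by simp
qed

lemma hh_isCont:
  assumes "t > 0" shows "isCont (\<lambda>t. hh \<beta> \<mu> n (of_real t)) t"
  unfolding hh_def using assms by (intro continuous_intros) auto

lemma hh_cont: "continuous_on {0<..} (\<lambda>t. hh \<beta> \<mu> n (of_real t))"
  by (intro continuous_at_imp_continuous_on ballI hh_isCont) auto

lemma hh_integrable:
  assumes b: "Re \<beta> > 0" and m: "Re \<mu> > 0"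
  shows "(\<lambda>t. hh \<beta> \<mu> n (of_real t)) absolutely_integrable_on {0<..}"
proof -
  have g: "(\<lambda>t. of_real t powr ((\<beta> + of_nat n) - 1) / of_real (exp (Re \<mu> * t))) absolutely_integrable_on {0<..}"
    by (rule absolutely_integrable_Gamma_integral) (use b m in auto)
  have g2: "(\<lambda>t. of_real (norm \<mu> ^ n) * (of_real t powr ((\<beta> + of_nat n) - 1) / of_real (exp (Re \<mu> * t)))) absolutely_integrable_on {0<..}"
    by (rule set_integrable_mult_right) (rule g)
  show ?thesis
  proof (rule set_integrable_bound[OF g2])
    show "set_borel_measurable lebesgue {0<..} (\<lambda>t. hh \<beta> \<mu> n (of_real t))"
      unfolding set_borel_measurable_def
      by (intro measurable_completion) (auto intro!: borel_measurable_continuous_on_indicator hh_cont)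
    show "AE x in lebesgue. x \<in> {0<..} \<longrightarrow> norm (hh \<beta> \<mu> n (of_real x))
       \<le> norm (of_real (norm \<mu> ^ n) * (of_real x powr ((\<beta> + of_nat n) - 1) / of_real (exp (Re \<mu> * x))) :: complex)"
    proof (rule AE_I2, rule impI)
      fix x :: real assume x: "x \<in> {0<..}"
      hence x0: "x > 0" by simp
      have "norm (of_real (norm \<mu> ^ n) * (of_real x powr ((\<beta> + of_nat n) - 1) / of_real (exp (Re \<mu> * x))) :: complex)
           = norm \<mu> ^ n * (x powr (Re \<beta> + real n - 1) / exp (Re \<mu> * x))"
        using x0 by (simp add: norm_mult norm_divide norm_powr_real_powr norm_power)
      also have "\<dots> = norm (hh \<beta> \<mu> n (of_real x))"
        using x0 by (simp add: norm_hh exp_minus field_simps)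
      finally show "norm (hh \<beta> \<mu> n (of_real x)) \<le> norm (of_real (norm \<mu> ^ n) * (of_real x powr ((\<beta> + of_nat n) - 1) / of_real (exp (Re \<mu> * x))) :: complex)"
        by simp
    qed
  qed
qed

lemma aux1:
  fixes x y u v w z :: complex
  shows "x * y / (u * v) / w * z = x * z / (v * w) * (y / u)"
  by (simp add: divide_inverse mult_ac)

lemma aux2:
  fixes A B C D P E M T W :: complex
  shows "A * B / (C * D) / W * (P * T ^ n * M ^ n * E) = P * E * (A * B / (C * D) * (M * T) ^ n / W)"
  by (simp add: divide_inverse power_mult_distrib mult_ac)

theorem mainTheorem18:
  fixes m k :: nat and \<beta> \<mu> :: complex
  assumes "m \<ge> 1" and "k \<ge> 1"
    and "\<beta> / 2 - of_nat m \<notin> \<int>\<^sub>\<le>\<^sub>0"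
    and "Re \<beta> > 0" and "Re \<mu> > 0"
  shows "((\<lambda>t::real. (complex_of_real t) powr (\<beta> - 1) * exp (- \<mu> * complex_of_real t)
            * hyp2F2_trunc (- 2 * of_nat m - 1) (- of_nat m - of_nat k - 1/2)
                           (- 2 * of_nat m - 2 * of_nat k - 1) (\<beta> / 2 - of_nat m)
                           (2 * m + 1) (\<mu> * complex_of_real t))
          has_integral 0) {0<..}"
proof -
  note cb = assms(3) and rb = assms(4) and rm = assms(5)
  define N where "N = 2*m+1"
  define cc where "cc n = pochhammer (- 2 * of_nat m - 1) n * pochhammer (- of_nat m - of_nat k - 1/2) n
     / (pochhammer (- 2 * of_nat m - 2 * of_nat k - 1) n * pochhammer (\<beta> / 2 - of_nat m) n) / fact n" for n
  define f where "f t = (\<Sum>n=0..N. cc n * hh \<beta> \<mu> n (of_real t))" for t :: real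
  define Fc where "Fc z = - (\<Sum>n=0..N. cc n * KK \<beta> \<mu> n z)" for z :: complex
  define F where "F t = Fc (of_real t)" for t :: real
  have alg: "(\<Sum>n=0..N. cc n * pochhammer \<beta> n) = 0"
  proof -
    have "(\<Sum>n=0..N. cc n * pochhammer \<beta> n) =
       (\<Sum>n=0..2*m+1. (pochhammer (- of_nat (2*m+1)) n * pochhammer \<beta> n / (pochhammer (\<beta>/2 - of_nat m) n * fact n))
          * (pochhammer (- of_nat m - of_nat k - 1/2) n / pochhammer (2*(- of_nat m - of_nat k - 1/2)) n))"
      unfolding N_def
    proof (rule sum.cong[OF refl])
      fix n
      have e1: "(- of_nat (2*m+1) :: complex) = - 2 * of_nat m - 1" by simp
      have e2: "(2*(- of_nat m - of_nat k - 1/2) :: complex) = - 2 * of_nat m - 2 * of_nat k - 1" by (simp add: algebra_simps)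
      show "cc n * pochhammer \<beta> n = (pochhammer (- of_nat (2*m+1)) n * pochhammer \<beta> n / (pochhammer (\<beta>/2 - of_nat m) n * fact n))
          * (pochhammer (- of_nat m - of_nat k - 1/2) n / pochhammer (2*(- of_nat m - of_nat k - 1/2)) n)"
        unfolding e1 e2 cc_def by (rule aux1)
    qed
    also have "\<dots> = 0" by (rule watson_zero[OF cb])
    finally show ?thesis .
  qed
  have deriv: "(F has_vector_derivative f t) (at t)" if t: "t > 0" for t
  proof -
    have z: "complex_of_real t \<notin> \<real>\<^sub>\<le>\<^sub>0" using t by auto
    have "(Fc has_field_derivative - (\<Sum>n=0..N. cc n * (pochhammer \<beta> n * hh \<beta> \<mu> 0 (of_real t) - hh \<beta> \<mu> n (of_real t)))) (at (of_real t))"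
      unfolding Fc_def[abs_def]
      by (intro DERIV_minus DERIV_sum DERIV_cmult KK_deriv z)
    moreover have "- (\<Sum>n=0..N. cc n * (pochhammer \<beta> n * hh \<beta> \<mu> 0 (of_real t) - hh \<beta> \<mu> n (of_real t))) = f t"
    proof -
      have "- (\<Sum>n=0..N. cc n * (pochhammer \<beta> n * hh \<beta> \<mu> 0 (of_real t) - hh \<beta> \<mu> n (of_real t)))
          = f t - (\<Sum>n=0..N. cc n * pochhammer \<beta> n) * hh \<beta> \<mu> 0 (of_real t)"
        unfolding f_def by (simp add: right_diff_distrib sum_subtractf sum_distrib_right mult.assoc)
      thus ?thesis using alg by simp
    qed
    ultimately have "(Fc has_field_derivative f t) (at (of_real t))" by simp
    thus ?thesis unfolding F_def[abs_def] by (rule has_vector_derivative_real_field)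
  qed
  have fint: "f absolutely_integrable_on {0<..}"
    unfolding f_def[abs_def]
    by (intro absolutely_integrable_sum finite_atLeastAtMost set_integrable_mult_right hh_integrable rb rm)
  have fint2: "set_integrable lborel (einterval 0 \<infinity>) f"
  proof -
    have meas: "(\<lambda>x. indicator {0<..} x *\<^sub>R f x) \<in> borel_measurable lborel"
      unfolding f_def by (auto intro!: borel_measurable_continuous_on_indicator continuous_intros hh_cont)
    have "integrable lebesgue (\<lambda>x. indicator {0<..} x *\<^sub>R f x)"
      using fint by (simp add: set_integrable_def)
    hence "integrable lborel (\<lambda>x. indicator {0<..} x *\<^sub>R f x)"
      using integrable_completion[OF meas] by simp
    thus ?thesis by (simp add: set_integrable_def zero_ereal_def)
  qed
  have lim0: "((F \<circ> real_of_ereal) \<longlongrightarrow> 0) (at_right 0)"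
  proof -
    have "(F \<longlongrightarrow> 0) (at_right 0)"
    proof -
      have "((\<lambda>t. - (\<Sum>n=0..N. cc n * KK \<beta> \<mu> n (of_real t))) \<longlongrightarrow> - (\<Sum>n=0..N. cc n * 0)) (at_right 0)"
        by (intro tendsto_intros KK_lim gg_lim0 rb)
      thus ?thesis unfolding F_def Fc_def by simp
    qed
    thus ?thesis by (simp add: zero_ereal_def ereal_tendsto_simps)
  qed
  have limi: "((F \<circ> real_of_ereal) \<longlongrightarrow> 0) (at_left \<infinity>)"
  proof -
    have "(F \<longlongrightarrow> 0) at_top"
    proof -
      have "((\<lambda>t. - (\<Sum>n=0..N. cc n * KK \<beta> \<mu> n (of_real t))) \<longlongrightarrow> - (\<Sum>n=0..N. cc n * 0)) at_top"
        by (intro tendsto_intros KK_lim gg_limtop rm)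
      thus ?thesis unfolding F_def Fc_def by simp
    qed
    thus ?thesis by (simp add: ereal_tendsto_simps)
  qed
  have "(LBINT x=0..\<infinity>. f x) = 0 - 0"
  proof (rule interval_integral_FTC_integrable[OF _ _ _ fint2 lim0 limi])
    show "(0::ereal) < \<infinity>" by simp
    fix x assume "0 < ereal x" "ereal x < \<infinity>"
    hence x: "x > 0" by (simp add: zero_ereal_def)
    show "(F has_vector_derivative f x) (at x)" by (rule deriv[OF x])
    show "isCont f x" unfolding f_def[abs_def] using x by (intro continuous_intros hh_isCont)
  qed
  hence I: "(LINT x : {0<..} | lborel. f x) = 0"
    by (simp add: interval_lebesgue_integral_def zero_ereal_def)
  have fint3: "set_integrable lborel {0<..} f" using fint2 by (simp add: zero_ereal_def)
  have "(f has_integral 0) {0<..}"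
    using set_borel_integral_eq_integral[OF fint3] I
    by (metis has_integral_integral)
  moreover have eqf: "f t = (complex_of_real t) powr (\<beta> - 1) * exp (- \<mu> * complex_of_real t)
            * hyp2F2_trunc (- 2 * of_nat m - 1) (- of_nat m - of_nat k - 1/2)
                           (- 2 * of_nat m - 2 * of_nat k - 1) (\<beta> / 2 - of_nat m)
                           (2 * m + 1) (\<mu> * complex_of_real t)" for t
    unfolding f_def hyp2F2_trunc_def N_def sum_distrib_left
  proof (rule sum.cong[OF refl])
    fix n
    show "cc n * hh \<beta> \<mu> n (complex_of_real t) =
         complex_of_real t powr (\<beta> - 1) * exp (- \<mu> * complex_of_real t) *
         (pochhammer (- 2 * of_nat m - 1) n * pochhammer (- of_nat m - of_nat k - 1 / 2) n /
          (pochhammer (- 2 * of_nat m - 2 * of_nat k - 1) n * pochhammer (\<beta> / 2 - of_nat m) n) *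
          (\<mu> * complex_of_real t) ^ n / of_nat (fact n))"
      unfolding cc_def hh_def of_nat_fact by (rule aux2)
  qed
  ultimately show ?thesis
  proof -
    assume hi: "(f has_integral 0) {0<..}"
    assume eq: "\<And>t. f t = (complex_of_real t) powr (\<beta> - 1) * exp (- \<mu> * complex_of_real t)
            * hyp2F2_trunc (- 2 * of_nat m - 1) (- of_nat m - of_nat k - 1/2)
                           (- 2 * of_nat m - 2 * of_nat k - 1) (\<beta> / 2 - of_nat m)
                           (2 * m + 1) (\<mu> * complex_of_real t)"
    have fe: "f = (\<lambda>t. (complex_of_real t) powr (\<beta> - 1) * exp (- \<mu> * complex_of_real t)
            * hyp2F2_trunc (- 2 * of_nat m - 1) (- of_nat m - of_nat k - 1/2)
                           (- 2 * of_nat m - 2 * of_nat k - 1) (\<beta> / 2 - of_nat m)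
                           (2 * m + 1) (\<mu> * complex_of_real t))"
      by (rule ext) (rule eq)
    show ?thesis using hi unfolding fe .
  qed
qed

end
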